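(* In the setting where $\alpha\in(0,1)$ satisfies $\frac{1-\alpha}{1+\alpha}<\alpha^{1/2}$ and two boxes are given by $w_k=W_0/\alpha^{i+i_k}$, $h_k=H_0/\alpha^{j+j_k}$, $x_k=b_x\delta_i+(m+m_k)\delta_i$, $y_k=b_y\delta_j+(n+n_k)\delta_j$ ($k=1,2$) with $\delta_i=\frac{W_0}{\alpha^{i}}\frac{1-\alpha}{1+\alpha}$, $\delta_j=\frac{H_0}{\alpha^{j}}\frac{1-\alpha}{1+\alpha}$ and all offsets $i_k,j_k,m_k,n_k\in[-\tfrac12,\tfrac12]$: if all variables other than $i_1$ are held fixed, then the minimum of the IoU of the two boxes over $i_1\in[-\tfrac12,\tfrac12]$ is attained at $i_1=-\tfrac12$ or $i_1=\tfrac12$. *)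

theory Defs
  imports Complex_Main
begin

definition overlap1 :: "real \<Rightarrow> real \<Rightarrow> real \<Rightarrow> real \<Rightarrow> real" where
  "overlap1 c1 l1 c2 l2 =
     max 0 (min (c1 + l1/2) (c2 + l2/2) - max (c1 - l1/2) (c2 - l2/2))"

definition iou :: "real \<Rightarrow> real \<Rightarrow> real \<Rightarrow> real \<Rightarrow> real \<Rightarrow> real \<Rightarrow> real \<Rightarrow> real \<Rightarrow> real" where
  "iou x1 y1 w1 h1 x2 y2 w2 h2 =
     (let I = overlap1 x1 w1 x2 w2 * overlap1 y1 h1 y2 h2
      in I / (w1 * h1 + w2 * h2 - I))"

definition grid_iou ::
  "real \<Rightarrow> real \<Rightarrow> real \<Rightarrow> real \<Rightarrow> real \<Rightarrow> int \<Rightarrow> int \<Rightarrow> int \<Rightarrow> int \<Rightarrow>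
   real \<Rightarrow> real \<Rightarrow> real \<Rightarrow> real \<Rightarrow> real \<Rightarrow> real \<Rightarrow> real \<Rightarrow> real \<Rightarrow> real" where
  "grid_iou \<alpha> W0 H0 bx b_y i j m n i1 j1 m1 n1 i2 j2 m2 n2 =
     (let di = W0 / \<alpha> powr (real_of_int i) * ((1 - \<alpha>) / (1 + \<alpha>));
          dj = H0 / \<alpha> powr (real_of_int j) * ((1 - \<alpha>) / (1 + \<alpha>));
          w1 = W0 / \<alpha> powr (real_of_int i + i1); h1 = H0 / \<alpha> powr (real_of_int j + j1);
          w2 = W0 / \<alpha> powr (real_of_int i + i2); h2 = H0 / \<alpha> powr (real_of_int j + j2);
          x1 = bx * di + (real_of_int m + m1) * di; y1 = b_y * dj + (real_of_int n + n1) * dj;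
          x2 = bx * di + (real_of_int m + m2) * di; y2 = b_y * dj + (real_of_int n + n2) * dj
      in iou x1 y1 w1 h1 x2 y2 w2 h2)"

end

theory Submission
  imports Defs
begin

lemma min_concave:
  fixes l a b w x C :: real
  assumes "0 \<le> l" "l \<le> 1" "w = (1-l)*a + l*b"
  shows "(1-l)*min (x+a/2) C + l*min (x+b/2) C \<le> min (x+w/2) C"
proof -
  have 1: "(1-l)*min (x+a/2) C \<le> (1-l)*(x+a/2)" "(1-l)*min (x+a/2) C \<le> (1-l)*C"
    using assms by (auto intro!: mult_left_mono)
  have 2: "l*min (x+b/2) C \<le> l*(x+b/2)" "l*min (x+b/2) C \<le> l*C"
    using assms by (auto intro!: mult_left_mono)
  have "(1-l)*(x+a/2) + l*(x+b/2) = x + w/2" using assms(3) by (simp add: field_simps)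
  moreover have "(1-l)*C + l*C = C" by (simp add: algebra_simps)
  ultimately show ?thesis using 1 2 by linarith
qed

lemma max_convex:
  fixes l a b w x C :: real
  assumes "0 \<le> l" "l \<le> 1" "w = (1-l)*a + l*b"
  shows "max (x-w/2) C \<le> (1-l)*max (x-a/2) C + l*max (x-b/2) C"
proof -
  have 1: "(1-l)*max (x-a/2) C \<ge> (1-l)*(x-a/2)" "(1-l)*max (x-a/2) C \<ge> (1-l)*C"
    using assms by (auto intro!: mult_left_mono)
  have 2: "l*max (x-b/2) C \<ge> l*(x-b/2)" "l*max (x-b/2) C \<ge> l*C"
    using assms by (auto intro!: mult_left_mono)
  have "(1-l)*(x-a/2) + l*(x-b/2) = x - w/2" using assms(3) by (simp add: field_simps)
  moreover have "(1-l)*C + l*C = C" by (simp add: algebra_simps)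
  ultimately show ?thesis using 1 2 by linarith
qed

lemma iou_quasi:
  fixes x1 y1 h1 x2 y2 w2 h2 a b w :: real
  assumes "a \<le> w" "w \<le> b" "0 < a" "0 < h1" "0 < w2" "0 < h2"
  shows "min (iou x1 y1 a h1 x2 y2 w2 h2) (iou x1 y1 b h1 x2 y2 w2 h2)
           \<le> iou x1 y1 w h1 x2 y2 w2 h2"
proof -
  define g where "g u = min (x1 + u/2) (x2 + w2/2) - max (x1 - u/2) (x2 - w2/2)" for u
  define ox where "ox u = overlap1 x1 u x2 w2" for u
  define oy where "oy = overlap1 y1 h1 y2 h2"
  define A2 where "A2 = w2 * h2"
  define D where "D u = u * h1 + A2 - ox u * oy" for u
  define f where "f u = ox u * oy / D u" for u
  have oxg: "ox u = max 0 (g u)" for u unfolding ox_def g_def overlap1_def by simp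
  have ox0: "0 \<le> ox u" for u using oxg by simp
  have oxu: "0 < u \<Longrightarrow> ox u \<le> u" for u unfolding oxg g_def by auto
  have oy0: "0 \<le> oy" "oy \<le> h1" unfolding oy_def overlap1_def using assms by auto
  have A2p: "0 < A2" unfolding A2_def using assms by simp
  have Dp: "0 < u \<Longrightarrow> 0 < D u" for u
  proof -
    assume u: "0 < u"
    have "ox u * oy \<le> u * h1" using oxu[OF u] ox0 oy0 u by (intro mult_mono) auto
    thus ?thesis unfolding D_def using A2p by linarith
  qed
  have iou_eq: "iou x1 y1 u h1 x2 y2 w2 h2 = f u" for u
    unfolding iou_def f_def D_def ox_def oy_def A2_def Let_def by (simp add: mult.commute)
  have f0: "0 < u \<Longrightarrow> 0 \<le> f u" for u unfolding f_def using Dp[of u] ox0[of u] oy0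
    by (intro divide_nonneg_pos mult_nonneg_nonneg) auto
  have wp: "0 < w" "0 < b" using assms by auto
  define t where "t = min (f a) (f b)"
  have "t \<le> f w"
  proof (cases "t \<le> 0")
    case True thus ?thesis using f0[OF wp(1)] by linarith
  next
    case False
    hence tp: "0 < t" by simp
    have ev: "0 \<le> (1+t)*oy*g u - t*h1*u - t*A2" if u: "0 < u" "t \<le> f u" for u
    proof -
      have "t * D u \<le> ox u * oy" using u Dp[OF u(1)] unfolding f_def
        by (simp add: pos_le_divide_eq)
      moreover have "0 < ox u * oy" using calculation tp Dp[OF u(1)]
        by (smt (verit) mult_pos_pos)
      hence "0 < ox u" using oy0 by (simp add: zero_less_mult_iff)
      hence "ox u = g u" using oxg by simp
      ultimately show ?thesis unfolding D_def by (simp add: algebra_simps)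
    qed
    have ea: "0 \<le> (1+t)*oy*g a - t*h1*a - t*A2" using ev assms t_def by auto
    have eb: "0 \<le> (1+t)*oy*g b - t*h1*b - t*A2" using ev wp t_def by auto
    have ew: "0 \<le> (1+t)*oy*g w - t*h1*w - t*A2"
    proof (cases "a = b")
      case True thus ?thesis using ea assms by auto
    next
      case False
      hence ab: "a < b" using assms by auto
      define l where "l = (w - a)/(b - a)"
      have l: "0 \<le> l" "l \<le> 1" unfolding l_def using assms ab by auto
      have "l*(b-a) = w - a" unfolding l_def using ab by simp
      hence weq: "w = (1-l)*a + l*b" by (simp add: algebra_simps)
      have gc: "(1-l)*g a + l*g b \<le> g w"
        using min_concave[OF l weq, of x1 "x2 + w2/2"] max_convex[OF l weq, of x1 "x2 - w2/2"]
        unfolding g_def by (simp add: algebra_simps)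
      have "(1+t)*oy*((1-l)*g a + l*g b) \<le> (1+t)*oy*g w"
        using gc tp oy0 by (intro mult_left_mono) auto
      moreover have "0 \<le> (1-l)*((1+t)*oy*g a - t*h1*a - t*A2) + l*((1+t)*oy*g b - t*h1*b - t*A2)"
        using ea eb l by auto
      moreover have "(1-l)*((1+t)*oy*g a - t*h1*a - t*A2) + l*((1+t)*oy*g b - t*h1*b - t*A2)
          = (1+t)*oy*((1-l)*g a + l*g b) - t*h1*w - t*A2"
        unfolding weq by (simp add: algebra_simps)
      ultimately show ?thesis by linarith
    qed
    have "oy * g w \<le> oy * ox w" using oy0 oxg by (intro mult_left_mono) auto
    hence "(1+t)*oy*g w \<le> (1+t)*oy*ox w" using tp by (simp add: mult.assoc)
    hence "t * D w \<le> ox w * oy" using ew unfolding D_def by (simp add: algebra_simps)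
    thus ?thesis unfolding f_def using Dp[OF wp(1)] by (simp add: pos_le_divide_eq)
  qed
  thus ?thesis unfolding iou_eq t_def .
qed

theorem lemma2:
  fixes \<alpha> W0 H0 bx b_y :: real and i j m n :: int
    and j1 m1 n1 i2 j2 m2 n2 :: real
  assumes "0 < \<alpha>" "\<alpha> < 1"
    and "(1 - \<alpha>) / (1 + \<alpha>) < \<alpha> powr (1/2)"
    and "0 < W0" "0 < H0"
    and "j1 \<in> {-1/2..1/2}" "m1 \<in> {-1/2..1/2}" "n1 \<in> {-1/2..1/2}"
    and "i2 \<in> {-1/2..1/2}" "j2 \<in> {-1/2..1/2}" "m2 \<in> {-1/2..1/2}" "n2 \<in> {-1/2..1/2}"
  shows "\<exists>e \<in> {-1/2, 1/2}. \<forall>i1 \<in> {-1/2..1/2}.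
           grid_iou \<alpha> W0 H0 bx b_y i j m n e j1 m1 n1 i2 j2 m2 n2
             \<le> grid_iou \<alpha> W0 H0 bx b_y i j m n i1 j1 m1 n1 i2 j2 m2 n2"
proof -
  define G where "G i1 = grid_iou \<alpha> W0 H0 bx b_y i j m n i1 j1 m1 n1 i2 j2 m2 n2" for i1
  define di where "di = W0 / \<alpha> powr (real_of_int i) * ((1 - \<alpha>) / (1 + \<alpha>))"
  define dj where "dj = H0 / \<alpha> powr (real_of_int j) * ((1 - \<alpha>) / (1 + \<alpha>))"
  define h1 where "h1 = H0 / \<alpha> powr (real_of_int j + j1)"
  define w2 where "w2 = W0 / \<alpha> powr (real_of_int i + i2)"
  define h2 where "h2 = H0 / \<alpha> powr (real_of_int j + j2)"
  define x1 where "x1 = bx * di + (real_of_int m + m1) * di"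
  define y1 where "y1 = b_y * dj + (real_of_int n + n1) * dj"
  define x2 where "x2 = bx * di + (real_of_int m + m2) * di"
  define y2 where "y2 = b_y * dj + (real_of_int n + n2) * dj"
  define W where "W i1 = W0 / \<alpha> powr (real_of_int i + i1)" for i1
  have GE: "G i1 = iou x1 y1 (W i1) h1 x2 y2 w2 h2" for i1
    unfolding G_def grid_iou_def Let_def di_def dj_def h1_def w2_def h2_def x1_def y1_def
      x2_def y2_def W_def by simp
  have pos: "0 < h1" "0 < w2" "0 < h2" unfolding h1_def w2_def h2_def using assms by auto
  have Wmono: "W u \<le> W v" if "u \<le> v" for u v
  proof -
    have "\<alpha> powr (real_of_int i + v) \<le> \<alpha> powr (real_of_int i + u)"
      using that assms(1,2) by (intro powr_mono') auto
    thus ?thesis unfolding W_def using assms(1,4)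
      by (intro divide_left_mono) auto
  qed
  have Wpos: "0 < W u" for u unfolding W_def using assms by auto
  have key: "min (G (-1/2)) (G (1/2)) \<le> G i1" if "i1 \<in> {-1/2..1/2}" for i1
    unfolding GE using that pos Wpos by (intro iou_quasi Wmono) auto
  show ?thesis
  proof (cases "G (-1/2) \<le> G (1/2)")
    case True
    show ?thesis
      by (rule bexI[of _ "-1/2"]) (use key True in \<open>auto simp: G_def min_def\<close>)
  next
    case False
    show ?thesis
      by (rule bexI[of _ "1/2"]) (use key False in \<open>auto simp: G_def min_def split: if_splits\<close>)
  qed
qed

end
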